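(* Let $h\ge r$ be positive integers and let $0<\beta<1$ be a real. There is a positive real $\alpha$ depending on $h,r,\beta$ such that the following holds. Let $G$ be any graph on $n$ vertices and let $p=p_r(G)$. For $i,j\in[h]$ let $\mathcal{A}_{i,j}$ denote the set of $i$-good sequences of length $j$ relative to $(\alpha,\beta,h,r)$ in $V(G)$. Then for each $i\in[h]$ and $r\le j\le h$, \[\sum_{S\in\mathcal{A}_{i,j}}|N(S)|^r\geq (1-\beta)\,n^{j+r}p^{jr}.\] In particular, there exists an $i$-good sequence $S$ of length $j$ such that $|N(S)|\ge(1-\beta)^{1/r}p^j n$.
   Context: All graphs are finite and simple. For a positive integer $r$, $p_r(G)=t_{K_{1,r}}(G)^{1/r}=\frac1n\left(\frac1n\sum_{v\in V(G)}d(v)^r\right)^{1/r}$ where $n=|G|$. A sequence in a set $W$ is a finite sequence of elements of $W$ (repetitions allowed); its length $|S|$ counts multiplicity; $W^k$ denotes the set of sequences of length $k$ in $W$. For a sequence $S$ in $V(G)$, $N(S)$ is the set of vertices adjacent to every vertex of $S$. Goodness: fix reals $0<\alpha,\beta<1$ and positive integers $h,r$, and let $p=p_r(G)$. A sequence $T$ in $V(G)$ is $0$-good if $|N(T)|\ge\alpha p^{|T|}n$. For $1\le i\le h$, a sequence $S$ in $V(G)$ of length at most $h$ is $i$-good if $S$ is $0$-good and for each $|S|\le k\le h$, the number of $(i-1)$-good sequences in $N(S)^k$ is at least $(1-\beta)|N(S)|^k$. These are called $i$-good relative to $(\alpha,\beta,h,r)$. *)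

theory Defs
  imports Complex_Main
begin

definition simple_graph :: "'a set \<Rightarrow> ('a \<Rightarrow> 'a \<Rightarrow> bool) \<Rightarrow> bool" where
  "simple_graph V E \<longleftrightarrow> finite V \<and> (\<forall>x y. E x y \<longrightarrow> E y x) \<and> (\<forall>x. \<not> E x x)
     \<and> (\<forall>x y. E x y \<longrightarrow> x \<in> V \<and> y \<in> V)"

definition degree :: "'a set \<Rightarrow> ('a \<Rightarrow> 'a \<Rightarrow> bool) \<Rightarrow> 'a \<Rightarrow> nat" where
  "degree V E v = card {u \<in> V. E v u}"

definition p_r :: "nat \<Rightarrow> 'a set \<Rightarrow> ('a \<Rightarrow> 'a \<Rightarrow> bool) \<Rightarrow> real" where
  "p_r r V E = (1 / real (card V)) *
     ((1 / real (card V)) * (\<Sum>v\<in>V. real (degree V E v) ^ r)) powr (1 / real r)"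

definition nbhd :: "'a set \<Rightarrow> ('a \<Rightarrow> 'a \<Rightarrow> bool) \<Rightarrow> 'a list \<Rightarrow> 'a set" where
  "nbhd V E S = {v \<in> V. \<forall>u \<in> set S. E u v}"

definition seqs :: "'a set \<Rightarrow> nat \<Rightarrow> 'a list set" where
  "seqs W k = {xs. set xs \<subseteq> W \<and> length xs = k}"

fun good :: "real \<Rightarrow> real \<Rightarrow> nat \<Rightarrow> nat \<Rightarrow> 'a set \<Rightarrow> ('a \<Rightarrow> 'a \<Rightarrow> bool) \<Rightarrow> nat \<Rightarrow> 'a list \<Rightarrow> bool" where
  "good \<alpha> \<beta> h r V E 0 T =
     (real (card (nbhd V E T)) \<ge> \<alpha> * p_r r V E ^ length T * real (card V))"
| "good \<alpha> \<beta> h r V E (Suc i) S =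
     (length S \<le> h \<and> good \<alpha> \<beta> h r V E 0 S \<and>
      (\<forall>k. length S \<le> k \<and> k \<le> h \<longrightarrow>
         real (card {T \<in> seqs (nbhd V E S) k. good \<alpha> \<beta> h r V E i T})
           \<ge> (1 - \<beta>) * real (card (nbhd V E S)) ^ k))"

definition goodset :: "real \<Rightarrow> real \<Rightarrow> nat \<Rightarrow> nat \<Rightarrow> 'a set \<Rightarrow> ('a \<Rightarrow> 'a \<Rightarrow> bool) \<Rightarrow> nat \<Rightarrow> nat \<Rightarrow> 'a list set" where
  "goodset \<alpha> \<beta> h r V E i j = {S \<in> seqs V j. good \<alpha> \<beta> h r V E i S}"

end

theory Submission
  imports Defs
begin

lemma cheb_set:
  fixes a :: "'b \<Rightarrow> real"
  assumes "finite A" "\<And>x. x \<in> A \<Longrightarrow> a x \<ge> 0"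
  shows "(\<Sum>x\<in>A. a x) * (\<Sum>x\<in>A. a x ^ Suc m) \<le> real (card A) * (\<Sum>x\<in>A. a x ^ Suc (Suc m))"
proof -
  define b where "b x = a x ^ Suc m" for x
  have ab: "a x ^ Suc (Suc m) = a x * b x" for x unfolding b_def by simp
  let ?S = "(\<Sum>x\<in>A. \<Sum>y\<in>A. (a x - a y) * (b x - b y))"
  have e: "(a x - a y) * (b x - b y) = a x * b x + a y * b y - a x * b y - a y * b x" for x y
    by (simp add: algebra_simps)
  have "?S = (\<Sum>x\<in>A. \<Sum>y\<in>A. a x * b x) + (\<Sum>x\<in>A. \<Sum>y\<in>A. a y * b y) - (\<Sum>x\<in>A. \<Sum>y\<in>A. a x * b y) - (\<Sum>x\<in>A. \<Sum>y\<in>A. a y * b x)"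
    unfolding e by (simp add: sum_subtractf sum.distrib)
  also have "\<dots> = 2 * (real (card A) * (\<Sum>x\<in>A. a x * b x) - (\<Sum>x\<in>A. a x) * (\<Sum>x\<in>A. b x))"
    by (simp add: sum.swap[of "\<lambda>y x. a y * b x"] sum_distrib_left sum_distrib_right algebra_simps)
  finally have "?S = 2 * (real (card A) * (\<Sum>x\<in>A. a x ^ Suc (Suc m)) - (\<Sum>x\<in>A. a x) * (\<Sum>x\<in>A. a x ^ Suc m))"
    unfolding ab b_def by simp
  moreover have "?S \<ge> 0"
  proof (intro sum_nonneg)
    fix x y assume "x \<in> A" "y \<in> A"
    then have "a x \<ge> 0" "a y \<ge> 0" using assms by auto
    show "(a x - a y) * (b x - b y) \<ge> 0"
    proof (cases "a x \<le> a y")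
      case True
      then have "b x \<le> b y" unfolding b_def using power_mono \<open>a x \<ge> 0\<close> by blast
      then show ?thesis using True by (intro mult_nonpos_nonpos) auto
    next
      case False
      then have "b y \<le> b x" unfolding b_def using power_mono[of "a y" "a x" "Suc m"] \<open>a y \<ge> 0\<close> by linarith
      then show ?thesis using False by simp
    qed
  qed
  ultimately show ?thesis by (smt (verit))
qed

lemma jensen_pow:
  fixes a :: "'b \<Rightarrow> real"
  assumes "finite A" "\<And>x. x \<in> A \<Longrightarrow> a x \<ge> 0"
  shows "(\<Sum>x\<in>A. a x) ^ Suc m \<le> real (card A) ^ m * (\<Sum>x\<in>A. a x ^ Suc m)"
proof (induction m)
  case 0
  then show ?case by simp
next
  case (Suc m)
  have s0: "(\<Sum>x\<in>A. a x) \<ge> 0" using assms by (simp add: sum_nonneg)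
  have "(\<Sum>x\<in>A. a x) ^ Suc (Suc m) = (\<Sum>x\<in>A. a x) * (\<Sum>x\<in>A. a x) ^ Suc m" by simp
  also have "\<dots> \<le> (\<Sum>x\<in>A. a x) * (real (card A) ^ m * (\<Sum>x\<in>A. a x ^ Suc m))"
    using Suc s0 by (simp add: mult_left_mono)
  also have "\<dots> = real (card A) ^ m * ((\<Sum>x\<in>A. a x) * (\<Sum>x\<in>A. a x ^ Suc m))" by simp
  also have "\<dots> \<le> real (card A) ^ m * (real (card A) * (\<Sum>x\<in>A. a x ^ Suc (Suc m)))"
    using cheb_set[OF assms] by (simp add: mult_left_mono)
  also have "\<dots> = real (card A) ^ Suc m * (\<Sum>x\<in>A. a x ^ Suc (Suc m))"
    by (simp only: power_Suc[of "real (card A)"] mult.left_commute)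
  finally show ?case .
qed

lemma finite_seqs: "finite W \<Longrightarrow> finite (seqs W k)"
  unfolding seqs_def by (rule finite_lists_length_eq)

lemma card_seqs: "finite W \<Longrightarrow> card (seqs W k) = card W ^ k"
  unfolding seqs_def by (rule card_lists_length_eq)

lemma nbhd_sub: "nbhd V E S \<subseteq> V" unfolding nbhd_def by auto

lemma sg_finite: "simple_graph V E \<Longrightarrow> finite V" unfolding simple_graph_def by auto

lemma finite_nbhd: "simple_graph V E \<Longrightarrow> finite (nbhd V E S)"
  using sg_finite nbhd_sub finite_subset by metis

lemma seqs_nbhd_iff:
  "T \<in> seqs (nbhd V E S) k \<longleftrightarrow> T \<in> seqs V k \<and> (\<forall>u\<in>set S. \<forall>v\<in>set T. E u v)"
  unfolding seqs_def nbhd_def by auto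

lemma double_count:
  assumes G: "simple_graph V E"
  shows "(\<Sum>S\<in>seqs V j. real (card {T\<in>seqs (nbhd V E S) k. P T}))
       = (\<Sum>T\<in>seqs V k. if P T then real (card (nbhd V E T)) ^ j else 0)"
proof -
  have fin: "finite V" using G sg_finite by auto
  let ?R = "\<lambda>S T. P T \<and> (\<forall>u\<in>set S. \<forall>v\<in>set T. E u v)"
  have symm: "?R S T \<longleftrightarrow> P T \<and> (\<forall>u\<in>set T. \<forall>v\<in>set S. E u v)" for S T
    using G unfolding simple_graph_def by blast
  have 1: "{T\<in>seqs (nbhd V E S) k. P T} = {T\<in>seqs V k. ?R S T}" if "S \<in> seqs V j" for S
    using seqs_nbhd_iff by blast
  have 2: "real (card {T\<in>seqs V k. ?R S T}) = (\<Sum>T\<in>seqs V k. if ?R S T then 1 else 0)" for S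
    using finite_seqs[OF fin] by (simp add: sum.inter_filter[symmetric])
  have 3: "(if P T then real (card (nbhd V E T)) ^ j else 0) = (\<Sum>S\<in>seqs V j. if ?R S T then 1 else 0)"
    if "T \<in> seqs V k" for T
  proof -
    have "(\<Sum>S\<in>seqs V j. if ?R S T then 1 else (0::real)) = real (card {S \<in> seqs V j. ?R S T})"
      using finite_seqs[OF fin] by (simp add: sum.inter_filter[symmetric])
    also have "{S \<in> seqs V j. ?R S T} = (if P T then seqs (nbhd V E T) j else {})"
      proof (cases "P T")
      case True
      have "S \<in> seqs V j \<and> (\<forall>u\<in>set S. \<forall>v\<in>set T. E u v) \<longleftrightarrow> S \<in> seqs (nbhd V E T) j" for S
        using seqs_nbhd_iff[of S V E T j] G unfolding simple_graph_def by blast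
      then show ?thesis using True by auto
    qed simp
    finally show ?thesis using card_seqs[OF finite_nbhd[OF G]] by simp
  qed
  have "(\<Sum>S\<in>seqs V j. real (card {T\<in>seqs (nbhd V E S) k. P T}))
      = (\<Sum>S\<in>seqs V j. \<Sum>T\<in>seqs V k. if ?R S T then 1 else 0)"
    using 1 2 by simp
  also have "\<dots> = (\<Sum>T\<in>seqs V k. \<Sum>S\<in>seqs V j. if ?R S T then 1 else 0)"
    by (rule sum.swap)
  also have "\<dots> = (\<Sum>T\<in>seqs V k. if P T then real (card (nbhd V E T)) ^ j else 0)"
    using 3 by simp
  finally show ?thesis .
qed

lemma p_nonneg: "p_r r V E \<ge> 0"
  unfolding p_r_def by (simp add: sum_nonneg)

lemma p_pos_n: "p_r r V E > 0 \<Longrightarrow> card V > 0"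
  unfolding p_r_def by (cases "card V = 0") auto

lemma sum_deg:
  assumes "card V > 0" "1 \<le> r"
  shows "(\<Sum>v\<in>V. real (degree V E v) ^ r) = real (card V) ^ (r+1) * p_r r V E ^ r"
proof -
  define n where "n = real (card V)"
  define Y where "Y = (1 / n) * (\<Sum>v\<in>V. real (degree V E v) ^ r)"
  have n0: "n > 0" using assms n_def by simp
  have Y0: "Y \<ge> 0" unfolding Y_def using n0 by (simp add: sum_nonneg)
  have pY: "p_r r V E = (1/n) * Y powr (1 / real r)" unfolding p_r_def n_def Y_def by simp
  have "(Y powr (1 / real r)) ^ r = Y"
  proof (cases "Y = 0")
    case True then show ?thesis using assms by simp
  next
    case False
    then have "Y > 0" using Y0 by simp
    then have "(Y powr (1 / real r)) ^ r = (Y powr (1 / real r)) powr (real r)"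
      by (simp add: powr_realpow)
    also have "\<dots> = Y" using assms Y0 by (simp add: powr_powr)
    finally show ?thesis .
  qed
  then have "p_r r V E ^ r = (1/n)^r * Y" unfolding pY by (simp only: power_mult_distrib)
  then have "n ^ (r+1) * p_r r V E ^ r = n * Y" using n0 by (simp add: field_simps)
  then show ?thesis unfolding Y_def n_def using n0 n_def by simp
qed

lemma seqs_one: "seqs V (Suc 0) = (\<lambda>v. [v]) ` V"
  unfolding seqs_def by (auto simp: length_Suc_conv)

lemma lower_bound:
  assumes G: "simple_graph V E" and r: "1 \<le> r" and j: "1 \<le> j"
  shows "(\<Sum>S\<in>seqs V j. real (card (nbhd V E S)) ^ r) \<ge> real (card V) ^ (j + r) * p_r r V E ^ (j * r)"
proof (cases "card V = 0")
  case True
  then have "p_r r V E = 0" unfolding p_r_def by simp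
  moreover have "j * r \<noteq> 0" using r j by simp
  ultimately show ?thesis by (simp add: sum_nonneg zero_power)
next
  case False
  define n where "n = real (card V)"
  have n0: "n > 0" using False n_def by simp
  have fin: "finite V" using G sg_finite by auto
  let ?p = "p_r r V E"
  have eq1: "(\<Sum>S\<in>seqs V j. real (card (nbhd V E S)) ^ r)
     = (\<Sum>T\<in>seqs V r. real (card (nbhd V E T)) ^ j)"
  proof -
    have "(\<Sum>S\<in>seqs V j. real (card (nbhd V E S)) ^ r)
        = (\<Sum>S\<in>seqs V j. real (card {T\<in>seqs (nbhd V E S) r. True}))"
      using card_seqs[OF finite_nbhd[OF G]] by simp
    also have "\<dots> = (\<Sum>T\<in>seqs V r. real (card (nbhd V E T)) ^ j)"
      using double_count[OF G, where j=j and k=r and P="\<lambda>_. True"] by simp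
    finally show ?thesis .
  qed
  have eq2: "(\<Sum>T\<in>seqs V r. real (card (nbhd V E T))) = n ^ (r+1) * ?p ^ r"
  proof -
    have "(\<Sum>T\<in>seqs V r. real (card (nbhd V E T))) = (\<Sum>T\<in>seqs V r. real (card (nbhd V E T)) ^ Suc 0)"
      by simp
    also have "\<dots> = (\<Sum>S\<in>seqs V (Suc 0). real (card {T\<in>seqs (nbhd V E S) r. True}))"
      using double_count[OF G, where j="Suc 0" and k=r and P="\<lambda>_. True"] by simp
    also have "\<dots> = (\<Sum>v\<in>V. real (card {T\<in>seqs (nbhd V E [v]) r. True}))"
      unfolding seqs_one by (subst sum.reindex) (auto simp: inj_on_def)
    also have "\<dots> = (\<Sum>v\<in>V. real (degree V E v) ^ r)"
    proof (rule sum.cong)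
      fix v assume "v \<in> V"
      have "nbhd V E [v] = {u \<in> V. E v u}" unfolding nbhd_def by auto
      then show "real (card {T\<in>seqs (nbhd V E [v]) r. True}) = real (degree V E v) ^ r"
        using card_seqs[OF finite_nbhd[OF G], of "[v]" r] unfolding degree_def by simp
    qed simp
    also have "\<dots> = n ^ (r+1) * ?p ^ r" using sum_deg[OF _ r] False n_def by simp
    finally show ?thesis .
  qed
  obtain m where m: "j = Suc m" using j by (cases j) auto
  have "(\<Sum>T\<in>seqs V r. real (card (nbhd V E T))) ^ Suc m
      \<le> real (card (seqs V r)) ^ m * (\<Sum>T\<in>seqs V r. real (card (nbhd V E T)) ^ Suc m)"
    by (rule jensen_pow) (auto simp: finite_seqs fin)
  then have ineq: "(n ^ (r+1) * ?p ^ r) ^ j \<le> n ^ (r * m) * (\<Sum>T\<in>seqs V r. real (card (nbhd V E T)) ^ j)"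
    unfolding eq2 m card_seqs[OF fin] n_def by (simp add: power_mult)
  have "(n ^ (r+1) * ?p ^ r) ^ j = n ^ (r * m) * (n ^ (j + r) * ?p ^ (j * r))"
    unfolding m by (simp add: power_mult_distrib power_add[symmetric] power_mult[symmetric] algebra_simps)
  with ineq have "n ^ (r * m) * (n ^ (j + r) * ?p ^ (j * r)) \<le> n ^ (r * m) * (\<Sum>T\<in>seqs V r. real (card (nbhd V E T)) ^ j)"
    by simp
  then have "n ^ (j + r) * ?p ^ (j * r) \<le> (\<Sum>T\<in>seqs V r. real (card (nbhd V E T)) ^ j)"
    using n0 by (simp add: mult_le_cancel_left_pos)
  then show ?thesis unfolding eq1 n_def .
qed

lemma good_mono:
  assumes G: "simple_graph V E"
  shows "good \<alpha> \<beta> h r V E (Suc i) S \<Longrightarrow> good \<alpha> \<beta> h r V E i S"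
proof (induction i arbitrary: S)
  case 0
  then show ?case by simp
next
  case (Suc i)
  have sub: "{T \<in> seqs (nbhd V E S) k. good \<alpha> \<beta> h r V E (Suc i) T}
     \<subseteq> {T \<in> seqs (nbhd V E S) k. good \<alpha> \<beta> h r V E i T}" for k
    using Suc.IH by blast
  have le: "real (card {T \<in> seqs (nbhd V E S) k. good \<alpha> \<beta> h r V E (Suc i) T})
     \<le> real (card {T \<in> seqs (nbhd V E S) k. good \<alpha> \<beta> h r V E i T})" for k
    by (intro of_nat_mono card_mono finite_subset[OF _ finite_seqs[OF finite_nbhd[OF G]]] sub) blast
  have P: "length S \<le> h \<and> good \<alpha> \<beta> h r V E 0 S \<and>
    (\<forall>k. length S \<le> k \<and> k \<le> h \<longrightarrow> real (card {T \<in> seqs (nbhd V E S) k. good \<alpha> \<beta> h r V E (Suc i) T})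
           \<ge> (1 - \<beta>) * real (card (nbhd V E S)) ^ k)"
    using Suc.prems unfolding good.simps(2)[of \<alpha> \<beta> h r V E "Suc i" S] .
  have "length S \<le> h \<and> good \<alpha> \<beta> h r V E 0 S \<and>
    (\<forall>k. length S \<le> k \<and> k \<le> h \<longrightarrow> real (card {T \<in> seqs (nbhd V E S) k. good \<alpha> \<beta> h r V E i T})
           \<ge> (1 - \<beta>) * real (card (nbhd V E S)) ^ k)"
    using P le order_trans by blast
  then show ?case unfolding good.simps(2)[of \<alpha> \<beta> h r V E i S] .
qed

lemma all_good:
  assumes G: "simple_graph V E" and p0: "p_r r V E = 0" and a1: "\<alpha> \<le> 1" and b0: "0 < \<beta>"
  shows "length S \<le> h \<Longrightarrow> good \<alpha> \<beta> h r V E i S"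
proof (induction i arbitrary: S)
  case 0
  show ?case
  proof (cases "length S = 0")
    case True
    then have "nbhd V E S = V" unfolding nbhd_def by auto
    then show ?thesis using True mult_right_mono[OF a1, of "real (card V)"] by simp
  next
    case False
    then show ?thesis using p0 by (simp add: zero_power)
  qed
next
  case (Suc i)
  have 1: "good \<alpha> \<beta> h r V E 0 S"
  proof (cases "length S = 0")
    case True
    then have "nbhd V E S = V" unfolding nbhd_def by auto
    then show ?thesis using True mult_right_mono[OF a1, of "real (card V)"] by simp
  next
    case False
    then show ?thesis using p0 by (simp add: zero_power)
  qed
  have 2: "real (card {T \<in> seqs (nbhd V E S) k. good \<alpha> \<beta> h r V E i T}) \<ge> (1 - \<beta>) * real (card (nbhd V E S)) ^ k"
    if "k \<le> h" for k
  proof -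
    have "{T \<in> seqs (nbhd V E S) k. good \<alpha> \<beta> h r V E i T} = seqs (nbhd V E S) k"
      using Suc.IH that unfolding seqs_def by auto
    moreover have "card (seqs (nbhd V E S) k) = card (nbhd V E S) ^ k"
      by (rule card_seqs[OF finite_nbhd[OF G]])
    moreover have "(1 - \<beta>) * real (card (nbhd V E S)) ^ k \<le> real (card (nbhd V E S)) ^ k"
      using b0 mult_right_mono[of "1 - \<beta>" 1 "real (card (nbhd V E S)) ^ k"] by simp
    ultimately show ?thesis by simp
  qed
  then show ?case using 1 Suc.prems unfolding good.simps(2)[of \<alpha> \<beta> h r V E i S] by blast
qed

lemma alg_id:
  fixes n p :: real
  assumes "s \<le> k"
  shows "n ^ (k + j) * p ^ (k * j) = (n * p ^ j) ^ (k - s) * (n ^ (j + s) * p ^ (j * s))"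
proof -
  obtain t where k: "k = s + t" using assms le_Suc_ex by blast
  have "(n * p ^ j) ^ (k - s) = n ^ t * p ^ (j * t)" unfolding k by (simp add: power_mult_distrib power_mult)
  then show ?thesis unfolding k by (simp add: power_add algebra_simps power_mult)
qed

lemma base_bound:
  assumes G: "simple_graph V E" and a0: "0 < \<alpha>" and a1: "\<alpha> \<le> 1" and s: "1 \<le> s"
  shows "(\<Sum>S\<in>{S\<in>seqs V j. \<not> good \<alpha> \<beta> h r V E 0 S}. real (card (nbhd V E S)) ^ s)
     \<le> \<alpha> * real (card V) ^ (j + s) * p_r r V E ^ (j * s)"
proof -
  let ?n = "real (card V)" and ?p = "p_r r V E"
  let ?B = "{S\<in>seqs V j. \<not> good \<alpha> \<beta> h r V E 0 S}"
  have fin: "finite V" using G sg_finite by auto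
  have K0: "0 \<le> \<alpha> * (?p ^ j * ?n) ^ s" using a0 p_nonneg[of r V E] by simp
  have "\<forall>S\<in>?B. real (card (nbhd V E S)) ^ s \<le> \<alpha> * (?p ^ j * ?n) ^ s"
  proof
    fix S assume S: "S \<in> ?B"
    then have len: "length S = j" unfolding seqs_def by auto
    have "real (card (nbhd V E S)) < \<alpha> * ?p ^ j * ?n" using S len by auto
    then have "real (card (nbhd V E S)) ^ s \<le> (\<alpha> * ?p ^ j * ?n) ^ s"
      by (intro power_mono) auto
    also have "\<dots> = \<alpha> ^ s * (?p ^ j * ?n) ^ s" by (simp add: power_mult_distrib)
    also have "\<dots> \<le> \<alpha> * (?p ^ j * ?n) ^ s"
    proof (rule mult_right_mono)
      show "\<alpha> ^ s \<le> \<alpha>" using power_decreasing[OF s, of \<alpha>] a0 a1 by simp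
    qed (simp add: p_nonneg)
    finally show "real (card (nbhd V E S)) ^ s \<le> \<alpha> * (?p ^ j * ?n) ^ s" .
  qed
  then have "(\<Sum>S\<in>?B. real (card (nbhd V E S)) ^ s) \<le> real (card ?B) * (\<alpha> * (?p ^ j * ?n) ^ s)"
    by (intro sum_bounded_above) blast
  also have "\<dots> \<le> ?n ^ j * (\<alpha> * (?p ^ j * ?n) ^ s)"
  proof (rule mult_right_mono[OF _ K0])
    have "card ?B \<le> card (seqs V j)" by (intro card_mono finite_seqs fin) auto
    then show "real (card ?B) \<le> ?n ^ j" using card_seqs[OF fin, of j] by (metis of_nat_le_iff of_nat_power)
  qed
  also have "\<dots> = \<alpha> * ?n ^ (j + s) * ?p ^ (j * s)"
    by (simp add: power_mult_distrib power_add power_mult algebra_simps)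
  finally show ?thesis .
qed

declare good.simps(2)[simp del]

lemma step_bound:
  assumes G: "simple_graph V E" and b0: "0 < \<beta>" and a0: "0 < \<alpha>" and ad: "\<alpha> \<le> \<delta>"
    and d0: "0 < \<delta>" and d1: "\<delta> \<le> 1" and s: "1 \<le> s" and sj: "s \<le> j" and jh: "j \<le> h"
    and e0: "0 \<le> \<eta>'"
    and IH: "\<And>k. j \<le> k \<Longrightarrow> k \<le> h \<Longrightarrow>
      (\<Sum>T\<in>{T\<in>seqs V k. \<not> good \<alpha> \<beta> h r V E i T}. real (card (nbhd V E T)) ^ j)
        \<le> \<eta>' * real (card V) ^ (k + j) * p_r r V E ^ (k * j)"
  shows "(\<Sum>S\<in>{S\<in>seqs V j. \<not> good \<alpha> \<beta> h r V E (Suc i) S}. real (card (nbhd V E S)) ^ s)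
     \<le> (\<delta> + real (h+1) * (\<eta>' / (\<beta> * \<delta> ^ h))) * real (card V) ^ (j + s) * p_r r V E ^ (j * s)"
proof -
  let ?n = "real (card V)" and ?p = "p_r r V E"
  let ?B = "{S\<in>seqs V j. \<not> good \<alpha> \<beta> h r V E (Suc i) S}"
  let ?x = "\<lambda>S. real (card (nbhd V E S))"
  define D where "D = ?n ^ (j + s) * ?p ^ (j * s)"
  have fin: "finite V" using G sg_finite by auto
  have D0: "D \<ge> 0" unfolding D_def using p_nonneg[of r V E] by simp
  have c0: "0 \<le> \<delta> + real (h+1) * (\<eta>' / (\<beta> * \<delta> ^ h))" using d0 b0 e0 by simp
  show ?thesis
  proof (cases "?p = 0")
    case True
    have "?B = {}"
    proof -
      have "good \<alpha> \<beta> h r V E (Suc i) S" if "S \<in> seqs V j" for S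
      proof -
        have "\<alpha> \<le> 1" using ad d1 by linarith
        moreover have "length S \<le> h" using that jh unfolding seqs_def by auto
        ultimately show ?thesis using all_good[OF G True _ b0] by blast
      qed
      then show ?thesis by auto
    qed
    then have "(\<Sum>S\<in>?B. ?x S ^ s) = 0" by (simp only: sum.empty)
    moreover have "0 \<le> (\<delta> + real (h+1) * (\<eta>' / (\<beta> * \<delta> ^ h))) * ?n ^ (j + s) * ?p ^ (j * s)"
      using c0 p_nonneg[of r V E] by simp
    ultimately show ?thesis by linarith
  next
    case False
    then have p0: "?p > 0" using p_nonneg[of r V E] by simp
    then have n0: "?n > 0" using p_pos_n by simp
    define X where "X = ?n * ?p ^ j"
    have X0: "X > 0" unfolding X_def using n0 p0 by simp
    define b where "b k S = real (card {T\<in>seqs (nbhd V E S) k. \<not> good \<alpha> \<beta> h r V E i T})" for k S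
    have b0': "b k S \<ge> 0" for k S unfolding b_def by simp
    define F where "F S = \<delta> * X ^ s + (\<Sum>k\<in>{j..h}. b k S / (\<beta> * (\<delta> * X) ^ (k - s)))" for S
    have F0: "F S \<ge> 0" for S unfolding F_def using d0 X0 b0 b0' by (intro add_nonneg_nonneg sum_nonneg) auto
    have point: "?x S ^ s \<le> F S" if S: "S \<in> ?B" for S
    proof (cases "?x S \<le> \<delta> * X")
      case True
      then have "?x S ^ s \<le> (\<delta> * X) ^ s" by (intro power_mono) auto
      also have "\<dots> = \<delta> ^ s * X ^ s" by (simp add: power_mult_distrib)
      also have "\<dots> \<le> \<delta> * X ^ s"
        using power_decreasing[OF s, of \<delta>] d0 d1 X0 by (intro mult_right_mono) auto
      also have "\<dots> \<le> F S" unfolding F_def using b0 b0' d0 X0 by (intro add_increasing2 sum_nonneg) auto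
      finally show ?thesis .
    next
      case False
      have len: "length S = j" and Sin: "S \<in> seqs V j" using S unfolding seqs_def by auto
      have "\<alpha> * ?p ^ length S * ?n \<le> ?x S"
      proof -
        have "\<alpha> * X \<le> \<delta> * X" using ad X0 by (intro mult_right_mono) auto
        then show ?thesis using False len unfolding X_def by (simp add: algebra_simps)
      qed
      then have g0: "good \<alpha> \<beta> h r V E 0 S" by simp
      have ng: "\<not> good \<alpha> \<beta> h r V E (Suc i) S" using S by simp
      then obtain k where k: "j \<le> k" "k \<le> h"
        and lt: "real (card {T \<in> seqs (nbhd V E S) k. good \<alpha> \<beta> h r V E i T}) < (1 - \<beta>) * ?x S ^ k"
        using g0 len jh unfolding good.simps(2)[of \<alpha> \<beta> h r V E i S] by force
      have finN: "finite (seqs (nbhd V E S) k)" using finite_seqs[OF finite_nbhd[OF G]] .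
      have part: "real (card {T \<in> seqs (nbhd V E S) k. good \<alpha> \<beta> h r V E i T}) + b k S = ?x S ^ k"
      proof -
        have "card {T \<in> seqs (nbhd V E S) k. good \<alpha> \<beta> h r V E i T} + card {T\<in>seqs (nbhd V E S) k. \<not> good \<alpha> \<beta> h r V E i T}
            = card (seqs (nbhd V E S) k)"
        proof -
          let ?A = "{T \<in> seqs (nbhd V E S) k. good \<alpha> \<beta> h r V E i T}"
          let ?C = "{T\<in>seqs (nbhd V E S) k. \<not> good \<alpha> \<beta> h r V E i T}"
          have "?A \<union> ?C = seqs (nbhd V E S) k" by auto
          moreover have "card (?A \<union> ?C) = card ?A + card ?C"
            by (rule card_Un_disjoint) (use finN in auto)
          ultimately show ?thesis by (simp only:)
        qed
        then have H: "card {T \<in> seqs (nbhd V E S) k. good \<alpha> \<beta> h r V E i T} + card {T\<in>seqs (nbhd V E S) k. \<not> good \<alpha> \<beta> h r V E i T}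
            = card (nbhd V E S) ^ k" unfolding card_seqs[OF finite_nbhd[OF G]] .
        show ?thesis unfolding b_def by (simp only: of_nat_add[symmetric] of_nat_power[symmetric] H)
      qed
      have bk: "\<beta> * ?x S ^ k < b k S" using lt part by (simp add: algebra_simps)
      have dx: "0 < \<delta> * X" "\<delta> * X < ?x S" using False d0 X0 by auto
      have "?x S ^ s * (\<delta> * X) ^ (k - s) \<le> ?x S ^ s * ?x S ^ (k - s)"
        using dx by (intro mult_left_mono power_mono) auto
      also have "\<dots> = ?x S ^ k" using sj k by (simp add: power_add[symmetric])
      finally have "\<beta> * (?x S ^ s * (\<delta> * X) ^ (k - s)) < b k S" using bk b0
        by (smt (verit) mult_left_mono)
      moreover have pos: "0 < \<beta> * (\<delta> * X) ^ (k - s)" using b0 dx by simp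
      moreover have "\<beta> * (?x S ^ s * (\<delta> * X) ^ (k - s)) = ?x S ^ s * (\<beta> * (\<delta> * X) ^ (k - s))"
        by (simp only: mult.left_commute)
      ultimately have "?x S ^ s < b k S / (\<beta> * (\<delta> * X) ^ (k - s))"
        by (simp only: pos_less_divide_eq)
      also have "\<dots> \<le> (\<Sum>k\<in>{j..h}. b k S / (\<beta> * (\<delta> * X) ^ (k - s)))"
        using k b0 dx b0' by (intro member_le_sum) auto
      also have "\<dots> \<le> F S" unfolding F_def using d0 X0 by simp
      finally show ?thesis by simp
    qed
    have "(\<Sum>S\<in>?B. ?x S ^ s) \<le> (\<Sum>S\<in>?B. F S)" using point by (rule sum_mono)
    also have "\<dots> \<le> (\<Sum>S\<in>seqs V j. F S)"
      using F0 finite_seqs[OF fin] by (intro sum_mono2) auto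
    also have "\<dots> = ?n ^ j * (\<delta> * X ^ s) + (\<Sum>k\<in>{j..h}. (\<Sum>S\<in>seqs V j. b k S) / (\<beta> * (\<delta> * X) ^ (k - s)))"
      unfolding F_def
      by (simp add: sum.distrib card_seqs[OF fin] sum.swap[of _ "{j..h}"] sum_divide_distrib)
    also have "\<dots> \<le> \<delta> * D + (\<Sum>k\<in>{j..h}. \<eta>' / (\<beta> * \<delta> ^ h) * D)"
    proof (rule add_mono)
      show "?n ^ j * (\<delta> * X ^ s) \<le> \<delta> * D"
        unfolding X_def D_def by (simp add: power_mult_distrib power_add power_mult algebra_simps)
    next
      show "(\<Sum>k\<in>{j..h}. (\<Sum>S\<in>seqs V j. b k S) / (\<beta> * (\<delta> * X) ^ (k - s)))
          \<le> (\<Sum>k\<in>{j..h}. \<eta>' / (\<beta> * \<delta> ^ h) * D)"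
      proof (rule sum_mono)
        fix k assume k: "k \<in> {j..h}"
        have "(\<Sum>S\<in>seqs V j. b k S) = (\<Sum>T\<in>seqs V k. if \<not> good \<alpha> \<beta> h r V E i T then ?x T ^ j else 0)"
          unfolding b_def by (rule double_count[OF G])
        also have "\<dots> = (\<Sum>T\<in>{T\<in>seqs V k. \<not> good \<alpha> \<beta> h r V E i T}. ?x T ^ j)"
          using finite_seqs[OF fin] by (simp add: sum.inter_filter)
        also have "\<dots> \<le> \<eta>' * ?n ^ (k + j) * ?p ^ (k * j)" using IH k by auto
        also have "\<dots> = \<eta>' * (X ^ (k - s) * D)"
          unfolding X_def D_def using alg_id[of s k ?n j ?p] k sj by simp
        finally have 1: "(\<Sum>S\<in>seqs V j. b k S) \<le> \<eta>' * (X ^ (k - s) * D)" .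
        have pos: "0 < \<beta> * (\<delta> * X) ^ (k - s)" using b0 d0 X0 by simp
        have "(\<Sum>S\<in>seqs V j. b k S) / (\<beta> * (\<delta> * X) ^ (k - s)) \<le> \<eta>' * (X ^ (k - s) * D) / (\<beta> * (\<delta> * X) ^ (k - s))"
          using 1 pos by (simp add: divide_right_mono)
        also have "\<dots> = \<eta>' * D / (\<beta> * \<delta> ^ (k - s))"
          using X0 b0 d0 by (simp add: power_mult_distrib field_simps)
        also have "\<dots> \<le> \<eta>' * D / (\<beta> * \<delta> ^ h)"
        proof (rule divide_left_mono)
          have "\<delta> ^ h \<le> \<delta> ^ (k - s)" using power_decreasing[of "k - s" h \<delta>] d0 d1 k by auto
          then show "\<beta> * \<delta> ^ h \<le> \<beta> * \<delta> ^ (k - s)" using b0 by simp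
        qed (use e0 D0 b0 d0 in auto)
        finally show "(\<Sum>S\<in>seqs V j. b k S) / (\<beta> * (\<delta> * X) ^ (k - s)) \<le> \<eta>' / (\<beta> * \<delta> ^ h) * D"
          by simp
      qed
    qed
    also have "\<dots> \<le> \<delta> * D + real (h+1) * (\<eta>' / (\<beta> * \<delta> ^ h) * D)"
    proof -
      define c where "c = \<eta>' / (\<beta> * \<delta> ^ h) * D"
      have "real (card {j..h}) \<le> real (h + 1)" by simp
      moreover have "0 \<le> c" unfolding c_def using e0 b0 d0 D0 by simp
      ultimately have "real (card {j..h}) * c \<le> real (h+1) * c" by (rule mult_right_mono)
      moreover have "(\<Sum>k\<in>{j..h}. c) = real (card {j..h}) * c" by simp
      ultimately show ?thesis unfolding c_def[symmetric] by linarith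
    qed
    also have "\<dots> = (\<delta> + real (h+1) * (\<eta>' / (\<beta> * \<delta> ^ h))) * ?n ^ (j + s) * ?p ^ (j * s)"
      unfolding D_def by (simp add: algebra_simps)
    finally show ?thesis .
  qed
qed

lemma bad_all:
  assumes b0: "0 < \<beta>"
  shows "\<forall>\<eta>>0. \<exists>\<alpha>0>0. \<alpha>0 \<le> 1 \<and> (\<forall>\<alpha> (V::'a set) E s j. 0 < \<alpha> \<longrightarrow> \<alpha> \<le> \<alpha>0 \<longrightarrow> simple_graph V E
      \<longrightarrow> 1 \<le> s \<longrightarrow> s \<le> j \<longrightarrow> j \<le> h \<longrightarrow>
      (\<Sum>S\<in>{S\<in>seqs V j. \<not> good \<alpha> \<beta> h r V E i S}. real (card (nbhd V E S)) ^ s)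
        \<le> \<eta> * real (card V) ^ (j + s) * p_r r V E ^ (j * s))"
proof (induction i)
  case 0
  show ?case
  proof (intro allI impI)
    fix \<eta> :: real assume e: "0 < \<eta>"
    show "\<exists>\<alpha>0>0. \<alpha>0 \<le> 1 \<and> (\<forall>\<alpha> (V::'a set) E s j. 0 < \<alpha> \<longrightarrow> \<alpha> \<le> \<alpha>0 \<longrightarrow> simple_graph V E
      \<longrightarrow> 1 \<le> s \<longrightarrow> s \<le> j \<longrightarrow> j \<le> h \<longrightarrow>
      (\<Sum>S\<in>{S\<in>seqs V j. \<not> good \<alpha> \<beta> h r V E 0 S}. real (card (nbhd V E S)) ^ s)
        \<le> \<eta> * real (card V) ^ (j + s) * p_r r V E ^ (j * s))"
    proof (intro exI[of _ "min \<eta> 1"] conjI allI impI)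
      fix \<alpha> :: real and V :: "'a set" and E and s j :: nat
      assume a: "0 < \<alpha>" "\<alpha> \<le> min \<eta> 1" and G: "simple_graph V E" and s: "1 \<le> s"
      have "(\<Sum>S\<in>{S\<in>seqs V j. \<not> good \<alpha> \<beta> h r V E 0 S}. real (card (nbhd V E S)) ^ s)
          \<le> \<alpha> * real (card V) ^ (j + s) * p_r r V E ^ (j * s)"
        using base_bound[OF G a(1) _ s] a by simp
      also have "\<dots> \<le> \<eta> * real (card V) ^ (j + s) * p_r r V E ^ (j * s)"
        using a p_nonneg[of r V E] by (intro mult_right_mono) auto
      finally show "(\<Sum>S\<in>{S\<in>seqs V j. \<not> good \<alpha> \<beta> h r V E 0 S}. real (card (nbhd V E S)) ^ s)
        \<le> \<eta> * real (card V) ^ (j + s) * p_r r V E ^ (j * s)" .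
    qed (use e in auto)
  qed
next
  case (Suc i)
  show ?case
  proof (intro allI impI)
    fix \<eta> :: real assume e: "0 < \<eta>"
    define \<delta> where "\<delta> = min (\<eta>/2) 1"
    have d: "0 < \<delta>" "\<delta> \<le> 1" "\<delta> \<le> \<eta>/2" unfolding \<delta>_def using e by auto
    define \<eta>' where "\<eta>' = \<eta> / (2 * real (h+1)) * (\<beta> * \<delta> ^ h)"
    have e': "0 < \<eta>'" unfolding \<eta>'_def using e b0 d by simp
    have key: "real (h+1) * (\<eta>' / (\<beta> * \<delta> ^ h)) = \<eta> / 2"
    proof -
      have "\<beta> * \<delta> ^ h \<noteq> 0" using b0 d by simp
      then have "\<eta>' / (\<beta> * \<delta> ^ h) = \<eta> / (2 * real (h+1))" unfolding \<eta>'_def by simp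
      moreover have "real (h+1) * (\<eta> / (2 * real (h+1))) = \<eta> / 2" by (simp add: field_simps)
      ultimately show ?thesis by simp
    qed
    obtain \<alpha>1 where a1: "\<alpha>1 > 0" "\<alpha>1 \<le> 1" and IH: "\<forall>\<alpha> (V::'a set) E s j. 0 < \<alpha> \<longrightarrow> \<alpha> \<le> \<alpha>1 \<longrightarrow> simple_graph V E
      \<longrightarrow> 1 \<le> s \<longrightarrow> s \<le> j \<longrightarrow> j \<le> h \<longrightarrow>
      (\<Sum>S\<in>{S\<in>seqs V j. \<not> good \<alpha> \<beta> h r V E i S}. real (card (nbhd V E S)) ^ s)
        \<le> \<eta>' * real (card V) ^ (j + s) * p_r r V E ^ (j * s)"
      using Suc.IH e' by blast
    show "\<exists>\<alpha>0>0. \<alpha>0 \<le> 1 \<and> (\<forall>\<alpha> (V::'a set) E s j. 0 < \<alpha> \<longrightarrow> \<alpha> \<le> \<alpha>0 \<longrightarrow> simple_graph V E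
      \<longrightarrow> 1 \<le> s \<longrightarrow> s \<le> j \<longrightarrow> j \<le> h \<longrightarrow>
      (\<Sum>S\<in>{S\<in>seqs V j. \<not> good \<alpha> \<beta> h r V E (Suc i) S}. real (card (nbhd V E S)) ^ s)
        \<le> \<eta> * real (card V) ^ (j + s) * p_r r V E ^ (j * s))"
    proof (intro exI[of _ "min \<alpha>1 \<delta>"] conjI allI impI)
      fix \<alpha> :: real and V :: "'a set" and E and s j :: nat
      assume a: "0 < \<alpha>" "\<alpha> \<le> min \<alpha>1 \<delta>" and G: "simple_graph V E" and s: "1 \<le> s"
        and sj: "s \<le> j" and jh: "j \<le> h"
      have IH': "(\<Sum>T\<in>{T\<in>seqs V k. \<not> good \<alpha> \<beta> h r V E i T}. real (card (nbhd V E T)) ^ j)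
        \<le> \<eta>' * real (card V) ^ (k + j) * p_r r V E ^ (k * j)" if "j \<le> k" "k \<le> h" for k
        using IH a G s sj that by auto
      have "(\<Sum>S\<in>{S\<in>seqs V j. \<not> good \<alpha> \<beta> h r V E (Suc i) S}. real (card (nbhd V E S)) ^ s)
          \<le> (\<delta> + real (h+1) * (\<eta>' / (\<beta> * \<delta> ^ h))) * real (card V) ^ (j + s) * p_r r V E ^ (j * s)"
        by (rule step_bound[OF G b0 a(1) _ d(1) d(2) s sj jh _ IH']) (use a e' in auto)
      also have "\<dots> \<le> \<eta> * real (card V) ^ (j + s) * p_r r V E ^ (j * s)"
        unfolding key using d p_nonneg[of r V E] by (intro mult_right_mono) auto
      finally show "(\<Sum>S\<in>{S\<in>seqs V j. \<not> good \<alpha> \<beta> h r V E (Suc i) S}. real (card (nbhd V E S)) ^ s)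
        \<le> \<eta> * real (card V) ^ (j + s) * p_r r V E ^ (j * s)" .
    qed (use a1 d in auto)
  qed
qed

lemma good_mono_le:
  assumes G: "simple_graph V E" and "i \<le> i'"
  shows "good \<alpha> \<beta> h r V E i' S \<Longrightarrow> good \<alpha> \<beta> h r V E i S"
  using assms(2)
proof (induction i' rule: dec_induct)
  case base
  then show ?case .
next
  case (step m)
  then show ?case using good_mono[OF G] by blast
qed

lemma pow_root: "0 < (y::real) \<Longrightarrow> 1 \<le> r \<Longrightarrow> (y powr (1 / real r)) ^ r = y"
proof -
  assume y: "0 < y" and r: "1 \<le> r"
  have "(y powr (1 / real r)) ^ r = (y powr (1 / real r)) powr (real r)"
    using y by (simp add: powr_realpow)
  also have "\<dots> = y" using r y by (simp add: powr_powr)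
  finally show ?thesis .
qed

theorem theorem3p2:
  fixes h r :: nat and \<beta> :: real
  assumes "1 \<le> r" and "r \<le> h" and "0 < \<beta>" and "\<beta> < 1"
  shows "\<exists>\<alpha>::real. 0 < \<alpha> \<and> \<alpha> < 1 \<and>
    (\<forall>(V::'a set) E. simple_graph V E \<longrightarrow>
      (\<forall>i \<in> {1..h}. \<forall>j \<in> {r..h}.
         (\<Sum>S\<in>goodset \<alpha> \<beta> h r V E i j. real (card (nbhd V E S)) ^ r)
           \<ge> (1 - \<beta>) * real (card V) ^ (j + r) * p_r r V E ^ (j * r)
         \<and> (V \<noteq> {} \<longrightarrow> (\<exists>S \<in> goodset \<alpha> \<beta> h r V E i j.
              real (card (nbhd V E S)) \<ge> (1 - \<beta>) powr (1 / real r) * p_r r V E ^ j * real (card V)))))"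
proof -
  note r = assms(1) and rh = assms(2) and b0 = assms(3) and b1 = assms(4)
  obtain \<alpha>0 where a0: "\<alpha>0 > 0" "\<alpha>0 \<le> 1" and BA: "\<forall>\<alpha> (V::'a set) E s j. 0 < \<alpha> \<longrightarrow> \<alpha> \<le> \<alpha>0 \<longrightarrow> simple_graph V E
      \<longrightarrow> 1 \<le> s \<longrightarrow> s \<le> j \<longrightarrow> j \<le> h \<longrightarrow>
      (\<Sum>S\<in>{S\<in>seqs V j. \<not> good \<alpha> \<beta> h r V E h S}. real (card (nbhd V E S)) ^ s)
        \<le> \<beta> * real (card V) ^ (j + s) * p_r r V E ^ (j * s)"
    using bad_all[OF b0, of h r] b0 by blast
  define \<alpha> where "\<alpha> = \<alpha>0 / 2"
  have a: "0 < \<alpha>" "\<alpha> < 1" "\<alpha> \<le> \<alpha>0" unfolding \<alpha>_def using a0 by auto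
  show ?thesis
  proof (intro exI[of _ \<alpha>] conjI allI impI ballI)
    show "0 < \<alpha>" "\<alpha> < 1" using a by auto
  next
    fix V :: "'a set" and E i j
    assume G: "simple_graph V E" and i: "i \<in> {1..h}" and j: "j \<in> {r..h}"
    let ?x = "\<lambda>S. real (card (nbhd V E S))"
    let ?n = "real (card V)" and ?p = "p_r r V E"
    let ?A = "goodset \<alpha> \<beta> h r V E i j"
    let ?B = "{S\<in>seqs V j. \<not> good \<alpha> \<beta> h r V E i S}"
    let ?Bh = "{S\<in>seqs V j. \<not> good \<alpha> \<beta> h r V E h S}"
    define D where "D = ?n ^ (j + r) * ?p ^ (j * r)"
    have fin: "finite V" using G sg_finite by auto
    have j1: "1 \<le> j" "r \<le> j" "j \<le> h" using j r by auto
    have LB: "(\<Sum>S\<in>seqs V j. ?x S ^ r) \<ge> D" unfolding D_def by (rule lower_bound[OF G r j1(1)])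
    have Bh: "(\<Sum>S\<in>?Bh. ?x S ^ r) \<le> \<beta> * D" unfolding D_def
      using BA[rule_format, of \<alpha> V E r j] a G r j1 by (simp add: mult.assoc)
    have sub: "?B \<subseteq> ?Bh" using good_mono_le[OF G, of i h] i by auto
    have BB: "(\<Sum>S\<in>?B. ?x S ^ r) \<le> (\<Sum>S\<in>?Bh. ?x S ^ r)"
      by (rule sum_mono2[OF _ sub]) (auto intro: finite_subset[OF _ finite_seqs[OF fin]])
    have split: "(\<Sum>S\<in>seqs V j. ?x S ^ r) = (\<Sum>S\<in>?A. ?x S ^ r) + (\<Sum>S\<in>?B. ?x S ^ r)"
    proof -
      have "seqs V j = ?A \<union> ?B" unfolding goodset_def by auto
      moreover have "(\<Sum>S\<in>?A \<union> ?B. ?x S ^ r) = (\<Sum>S\<in>?A. ?x S ^ r) + (\<Sum>S\<in>?B. ?x S ^ r)"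
        by (rule sum.union_disjoint) (auto simp: goodset_def intro: finite_subset[OF _ finite_seqs[OF fin]])
      ultimately show ?thesis by simp
    qed
    have main: "(\<Sum>S\<in>?A. ?x S ^ r) \<ge> (1 - \<beta>) * D" using LB Bh BB split by (simp add: algebra_simps)
    then show "(\<Sum>S\<in>?A. ?x S ^ r) \<ge> (1 - \<beta>) * ?n ^ (j + r) * ?p ^ (j * r)"
      unfolding D_def by (simp add: mult.assoc)
    assume Vne: "V \<noteq> {}"
    show "\<exists>S \<in> ?A. ?x S \<ge> (1 - \<beta>) powr (1 / real r) * ?p ^ j * ?n"
    proof (cases "?p = 0")
      case True
      obtain v where v: "v \<in> V" using Vne by auto
      have "replicate j v \<in> seqs V j" unfolding seqs_def using v by auto
      moreover have "good \<alpha> \<beta> h r V E i (replicate j v)"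
        using all_good[OF G True _ b0] a j1 by auto
      ultimately have "replicate j v \<in> ?A" unfolding goodset_def by auto
      moreover have "(1 - \<beta>) powr (1 / real r) * ?p ^ j * ?n = 0" using True j1 by simp
      ultimately show ?thesis by (metis of_nat_0_le_iff)
    next
      case False
      then have p0: "?p > 0" using p_nonneg[of r V E] by simp
      then have n0: "?n > 0" using p_pos_n by simp
      define c where "c = (1 - \<beta>) powr (1 / real r) * ?p ^ j * ?n"
      have c0: "c \<ge> 0" unfolding c_def using p0 n0 by simp
      have D0: "D > 0" unfolding D_def using p0 n0 by simp
      have cr: "?n ^ j * c ^ r = (1 - \<beta>) * D"
      proof -
        have "?n ^ j * c ^ r = ?n ^ j * (((1 - \<beta>) powr (1 / real r)) ^ r * ?p ^ (j * r) * ?n ^ r)"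
          unfolding c_def by (simp add: power_mult_distrib power_mult)
        also have "\<dots> = ?n ^ j * ((1 - \<beta>) * ?p ^ (j * r) * ?n ^ r)" using pow_root[of "1 - \<beta>" r] b1 r by simp
        also have "\<dots> = (1 - \<beta>) * D" unfolding D_def
          using power_add[of ?n j r] by (simp add: algebra_simps)
        finally show ?thesis .
      qed
      show ?thesis
      proof (rule ccontr)
        assume "\<not> ?thesis"
        then have lt: "\<And>S. S \<in> ?A \<Longrightarrow> ?x S < c" unfolding c_def by auto
        have finA: "finite ?A" unfolding goodset_def by (auto intro: finite_subset[OF _ finite_seqs[OF fin]])
        show False
        proof (cases "?A = {}")
          case True
          then have "(1 - \<beta>) * D \<le> 0" using main by simp
          moreover have "(1 - \<beta>) * D > 0" using D0 b1 by simp
          ultimately show False by linarith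
        next
          case False
          then have cA: "card ?A > 0" using finA by (simp add: card_gt_0_iff)
          have "\<forall>S\<in>?A. ?x S ^ r < c ^ r" using lt r by (auto intro: power_strict_mono)
          then have "(\<Sum>S\<in>?A. ?x S ^ r) < real (card ?A) * c ^ r"
            using cA by (intro sum_bounded_above_strict) auto
          also have "\<dots> \<le> ?n ^ j * c ^ r"
          proof (rule mult_right_mono)
            have "card ?A \<le> card (seqs V j)" unfolding goodset_def by (intro card_mono finite_seqs fin) auto
            then show "real (card ?A) \<le> ?n ^ j" using card_seqs[OF fin, of j] by (metis of_nat_le_iff of_nat_power)
          qed (use c0 in simp)
          also have "\<dots> = (1 - \<beta>) * D" using cr by simp
          finally show False using main by simp
        qed
      qed
    qed
  qed
qed

end
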